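(* Assume the $abc$-conjecture. Let $k \ge 3$ be an integer and $\epsilon>0$. Then there is a constant $C_{k,\epsilon}>0$ such that for all real $x \ge 1$ and all real $y$ with $1 \le y \le x$, \[ Q_k(x+y) - Q_k(x) \le C_{k,\epsilon}\, y^{(2+\epsilon)/k}. \]
   Context: A positive integer $n$ is $k$-full if every prime $p$ dividing $n$ satisfies $p^k \mid n$. $Q_k(x)$ denotes the number of $k$-full positive integers $n \le x$. For a nonzero integer $m$, $\kappa(m)=\prod_{p\mid m} p$ is the product of the distinct primes dividing $m$. The $abc$-conjecture is the statement: for every $\epsilon>0$ there is a constant $C_\epsilon>0$ such that for all integers $a,b,c$ with $a+b=c$ and $\gcd(a,b)=1$, one has $\max\{|a|,|b|,|c|\} \le C_\epsilon\, \kappa(abc)^{1+\epsilon}$. *)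

theory Defs
  imports "HOL-Analysis.Analysis" "HOL-Computational_Algebra.Primes"
begin

definition k_full :: "nat \<Rightarrow> nat \<Rightarrow> bool" where
  "k_full k n \<longleftrightarrow> (\<forall>p. prime p \<and> p dvd n \<longrightarrow> p ^ k dvd n)"

definition Q :: "nat \<Rightarrow> real \<Rightarrow> nat" where
  "Q k x = card {n::nat. 0 < n \<and> real n \<le> x \<and> k_full k n}"

definition kappa :: "int \<Rightarrow> int" where
  "kappa m = (\<Prod>p\<in>prime_factors m. p)"

definition abc_conjecture :: bool where
  "abc_conjecture \<longleftrightarrow>
     (\<forall>\<epsilon>::real. \<epsilon> > 0 \<longrightarrow> (\<exists>C::real. C > 0 \<and>
       (\<forall>a b c :: int. a + b = c \<and> coprime a b \<and> a * b * c \<noteq> 0 \<longrightarrow>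
          real_of_int (max \<bar>a\<bar> (max \<bar>b\<bar> \<bar>c\<bar>)) \<le> C * real_of_int (kappa (a * b * c)) powr (1 + \<epsilon>))))"

end

theory Submission
  imports Defs
begin

lemma kappa_pos: "kappa m > 0"
  unfolding kappa_def by (intro prod_pos) (auto dest: prime_factors_gt_0_int)

lemma kappa_mult: assumes "m \<noteq> 0" "n \<noteq> 0" shows "kappa (m*n) \<le> kappa m * kappa n"
proof -
  have "kappa (m*n) = (\<Prod>p\<in>prime_factors m \<union> prime_factors n. p)"
    unfolding kappa_def using assms by (simp add: prime_factors_product)
  also have "\<dots> * (\<Prod>p\<in>prime_factors m \<inter> prime_factors n. p) = kappa m * kappa n"
    unfolding kappa_def by (rule prod.union_inter) auto
  finally have eq: "kappa (m*n) * (\<Prod>p\<in>prime_factors m \<inter> prime_factors n. p) = kappa m * kappa n" .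
  have "(\<Prod>p\<in>prime_factors m \<inter> prime_factors n. p) \<ge> 1"
    by (intro prod_ge_1) (auto dest: prime_factors_gt_0_int)
  moreover have "kappa (m*n) > 0" by (rule kappa_pos)
  ultimately show ?thesis using eq
    by (metis mult_le_cancel_left1 order_less_imp_not_less)
qed

lemma kappa_dvd: assumes "m dvd n" "n \<noteq> 0" shows "kappa m \<le> kappa n"
proof -
  have sub: "prime_factors m \<subseteq> prime_factors n" using assms by (rule dvd_prime_factors[rotated])
  have "kappa n = (\<Prod>p\<in>prime_factors n - prime_factors m. p) * kappa m"
    unfolding kappa_def by (rule prod.subset_diff[OF sub]) auto
  moreover have "(\<Prod>p\<in>prime_factors n - prime_factors m. p) \<ge> 1"
    by (intro prod_ge_1) (auto dest: prime_factors_gt_0_int)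
  ultimately show ?thesis using kappa_pos[of m] by (simp add: mult_le_cancel_right1)
qed

lemma kappa_le_pow: assumes "m \<noteq> 0" "\<And>p. p \<in> prime_factors m \<Longrightarrow> j \<le> multiplicity p m"
  shows "kappa m ^ j \<le> \<bar>m\<bar>"
proof -
  have "kappa m ^ j = (\<Prod>p\<in>prime_factors m. p ^ j)"
    unfolding kappa_def by (simp add: prod_power_distrib)
  also have "\<dots> \<le> (\<Prod>p\<in>prime_factors m. p ^ multiplicity p m)"
  proof (intro prod_mono conjI)
    fix p assume p: "p \<in> prime_factors m"
    hence "p > 0" by (rule prime_factors_gt_0_int)
    thus "0 \<le> p ^ j" by simp
    show "p ^ j \<le> p ^ multiplicity p m"
      using \<open>p > 0\<close> assms(2)[OF p] by (intro power_increasing) auto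
  qed
  also have "\<dots> = \<bar>m\<bar>" using prod_prime_factors[OF assms(1)] by simp
  finally show ?thesis .
qed

lemma kappa_le: assumes "m \<noteq> 0" shows "kappa m \<le> \<bar>m\<bar>"
  using kappa_le_pow[OF assms, of 1]
  by (simp add: prime_factors_multiplicity Suc_le_eq)

lemma kappa_kfull: assumes "k_full k n" "n > 0"
  shows "kappa (int n) ^ k \<le> int n"
proof -
  have "kappa (int n) ^ k \<le> \<bar>int n\<bar>"
  proof (rule kappa_le_pow)
    fix p assume p: "p \<in> prime_factors (int n)"
    have pp: "prime p" "p dvd int n" using p by (auto simp: in_prime_factors_iff)
    have p0: "p > 0" using p by (rule prime_factors_gt_0_int)
    define q where "q = nat p"
    have pq: "p = int q" using p0 q_def by simp
    have "prime q" "q dvd n" using pp unfolding pq by auto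
    hence "q ^ k dvd n" using assms(1) unfolding k_full_def by blast
    hence "p ^ k dvd int n" unfolding pq by (simp add: of_nat_power[symmetric] del: of_nat_power)
    thus "k \<le> multiplicity p (int n)"
      using assms(2) pp(1) by (intro multiplicity_geI) auto
  qed (use assms in auto)
  thus ?thesis by simp
qed


lemma root_bound:
  fixes u v :: real assumes "0 \<le> u" "u ^ k \<le> v" "k \<ge> 1"
  shows "u \<le> v powr (1 / real k)"
proof (cases "u = 0")
  case True thus ?thesis by simp
next
  case False
  hence u: "u > 0" using assms by simp
  have "u = (u ^ k) powr (1 / real k)"
    using u assms(3) by (simp add: powr_realpow[symmetric] powr_powr)
  also have "\<dots> \<le> v powr (1 / real k)"
    using u assms by (intro powr_mono2) auto
  finally show ?thesis .
qed

lemma cop: "coprime (A::int) B \<Longrightarrow> coprime A (B - A)"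
  using coprime_imp_coprime zdvd_zdiffD by blast

lemma gap:
  fixes C e :: real and a b k :: nat
  assumes abc: "\<forall>a b c :: int. a + b = c \<and> coprime a b \<and> a * b * c \<noteq> 0 \<longrightarrow>
          real_of_int (max \<bar>a\<bar> (max \<bar>b\<bar> \<bar>c\<bar>)) \<le> C * real_of_int (kappa (a * b * c)) powr (1 + e)"
  and C: "C > 0" and e: "e > 0" and k: "k \<ge> 1"
  and ka: "k_full k a" and a0: "0 < a" and ab: "a < b" and kb: "k_full k b"
  shows "real b \<le> C * (real b powr (2 / real k) * real (b - a)) powr (1 + e)"
proof -
  define g where "g = gcd (int a) (int b)"
  have g0: "g > 0" using a0 unfolding g_def by simp
  define A where "A = int a div g"
  define B where "B = int b div g"
  define D where "D = B - A"
  have ha: "int a = g * A" unfolding A_def g_def by simp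
  have hb: "int b = g * B" unfolding B_def g_def by simp
  have A0: "A > 0" using ha a0 g0 by (metis of_nat_0_less_iff zero_less_mult_pos)
  have AB: "A < B" using ha hb ab g0 by (metis of_nat_less_iff mult_less_cancel_left_pos)
  have D0: "D > 0" using AB D_def by simp
  have cAB: "coprime A B" unfolding A_def B_def g_def using a0 by (intro div_gcd_coprime) simp
  hence cAD: "coprime A D" unfolding D_def by (rule cop)
  have "real_of_int (max \<bar>A\<bar> (max \<bar>D\<bar> \<bar>B\<bar>)) \<le> C * real_of_int (kappa (A * D * B)) powr (1 + e)"
  proof -
    have "A + D = B" "A * D * B \<noteq> 0" using A0 D0 AB D_def by auto
    thus ?thesis using abc cAD by blast
  qed
  moreover have "max \<bar>A\<bar> (max \<bar>D\<bar> \<bar>B\<bar>) = B" using A0 D0 AB D_def by simp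
  ultimately have B1: "real_of_int B \<le> C * real_of_int (kappa (A * D * B)) powr (1 + e)" by simp
  have "kappa (A * D * B) \<le> kappa (A * D) * kappa B" using A0 D0 AB by (intro kappa_mult) auto
  also have "\<dots> \<le> kappa A * kappa D * kappa B"
    using A0 D0 kappa_pos[of B] by (intro mult_right_mono kappa_mult) auto
  also have "\<dots> \<le> kappa (int a) * D * kappa (int b)"
  proof -
    have "kappa A \<le> kappa (int a)" using a0 ha by (intro kappa_dvd) auto
    moreover have "kappa B \<le> kappa (int b)" using ab hb by (intro kappa_dvd) auto
    moreover have "kappa D \<le> D" using kappa_le[of D] D0 by simp
    ultimately show ?thesis using kappa_pos[of A] kappa_pos[of B] kappa_pos[of D]
      by (intro mult_mono) (auto intro: mult_mono)
  qed
  finally have K1: "real_of_int (kappa (A * D * B)) \<le> real_of_int (kappa (int a)) * real_of_int D * real_of_int (kappa (int b))"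
    by (metis of_int_le_iff of_int_mult)
  have ra: "real_of_int (kappa (int a)) \<le> real b powr (1 / real k)"
  proof -
    have "kappa (int a) ^ k \<le> int a" by (rule kappa_kfull[OF ka a0])
    hence "real_of_int (kappa (int a)) ^ k \<le> real a" by (metis of_int_le_iff of_int_of_nat_eq of_int_power)
    hence "real_of_int (kappa (int a)) \<le> real a powr (1 / real k)"
      using kappa_pos[of "int a"] k by (intro root_bound) auto
    also have "\<dots> \<le> real b powr (1 / real k)" using ab by (intro powr_mono2) auto
    finally show ?thesis .
  qed
  have rb: "real_of_int (kappa (int b)) \<le> real b powr (1 / real k)"
  proof -
    have "kappa (int b) ^ k \<le> int b" by (rule kappa_kfull[OF kb]) (use ab in auto)
    hence "real_of_int (kappa (int b)) ^ k \<le> real b" by (metis of_int_le_iff of_int_of_nat_eq of_int_power)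
    thus ?thesis using kappa_pos[of "int b"] k by (intro root_bound) auto
  qed
  define X where "X = real b powr (2 / real k) * real_of_int D"
  have "real_of_int (kappa (A * D * B)) \<le> real b powr (1 / real k) * real_of_int D * real b powr (1 / real k)"
    using K1 ra rb D0 kappa_pos[of "int a"] kappa_pos[of "int b"]
    by (smt (verit, best) mult_mono mult_nonneg_nonneg of_int_0_le_iff powr_ge_zero)
  also have "\<dots> = X" unfolding X_def
    by (simp add: powr_add[symmetric] add_divide_distrib[symmetric] mult_ac)
  finally have KX: "real_of_int (kappa (A * D * B)) \<le> X" .
  have B2: "real_of_int B \<le> C * X powr (1 + e)"
    using B1 KX C e kappa_pos[of "A*D*B"]
    by (smt (verit, best) mult_left_mono of_int_0_less_iff powr_mono2)
  have g1: "real_of_int g \<le> real_of_int g powr (1 + e)"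
  proof -
    have "real_of_int g \<ge> 1" using g0 by simp
    hence "real_of_int g powr 1 \<le> real_of_int g powr (1 + e)" using e by (intro powr_mono) auto
    thus ?thesis using g0 by simp
  qed
  have X0: "X \<ge> 0" unfolding X_def using D0 by simp
  have "real b = real_of_int g * real_of_int B" using hb by (metis of_int_mult of_int_of_nat_eq)
  also have "\<dots> \<le> real_of_int g * (C * X powr (1 + e))" using B2 g0 by simp
  also have "\<dots> \<le> real_of_int g powr (1 + e) * (C * X powr (1 + e))"
    using g1 C by (intro mult_right_mono) auto
  also have "\<dots> = C * (real_of_int g * X) powr (1 + e)"
    using g0 X0 by (simp add: powr_mult)
  also have "real_of_int g * X = real b powr (2 / real k) * real (b - a)"
  proof -
    have "int (b - a) = g * D" using ha hb ab D_def by (simp add: of_nat_diff right_diff_distrib)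
    hence "real (b - a) = real_of_int g * real_of_int D" by (metis of_int_mult of_int_of_nat_eq)
    thus ?thesis unfolding X_def by simp
  qed
  finally show ?thesis .
qed


lemma gap2:
  fixes C e c th :: real and a b k :: nat
  assumes abc: "\<forall>a b c :: int. a + b = c \<and> coprime a b \<and> a * b * c \<noteq> 0 \<longrightarrow>
          real_of_int (max \<bar>a\<bar> (max \<bar>b\<bar> \<bar>c\<bar>)) \<le> C * real_of_int (kappa (a * b * c)) powr (1 + e)"
  and C: "C > 0" and e: "e > 0" and k: "k \<ge> 1"
  and c_def: "c = 1 / C powr (1 / (1 + e))" and th_def: "th = 1 / (1 + e) - 2 / real k"
  and ka: "k_full k a" and a0: "0 < a" and ab: "a < b" and kb: "k_full k b"
  shows "c * real b powr th \<le> real (b - a)"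
proof -
  define Y where "Y = real b powr (2 / real k) * real (b - a)"
  have Y0: "Y \<ge> 0" unfolding Y_def by simp
  have b0: "real b > 0" using ab by simp
  have "real b \<le> C * Y powr (1 + e)" unfolding Y_def by (rule gap[OF abc C e k ka a0 ab kb])
  hence "real b powr (1 / (1 + e)) \<le> (C * Y powr (1 + e)) powr (1 / (1 + e))"
    using e by (intro powr_mono2) auto
  also have "\<dots> = C powr (1 / (1 + e)) * Y"
    using C Y0 e by (simp add: powr_mult powr_powr)
  finally have h: "real b powr (1 / (1 + e)) \<le> C powr (1 / (1 + e)) * Y" .
  have Cp: "C powr (1 / (1 + e)) > 0" using C by simp
  have "c * real b powr (1 / (1 + e)) \<le> Y"
    using h Cp unfolding c_def by (simp add: field_simps)
  hence "c * real b powr (1 / (1 + e)) / real b powr (2 / real k) \<le> real (b - a)"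
    using b0 unfolding Y_def by (simp add: field_simps)
  moreover have "c * real b powr (1 / (1 + e)) / real b powr (2 / real k) = c * real b powr th"
    unfolding th_def using b0 by (simp add: powr_diff)
  ultimately show ?thesis by simp
qed


lemma finite_le: "finite {n::nat. 0 < n \<and> real n \<le> t \<and> k_full k n}"
proof (rule finite_subset[of _ "{..nat \<lceil>t\<rceil>}"])
  show "{n::nat. 0 < n \<and> real n \<le> t \<and> k_full k n} \<subseteq> {..nat \<lceil>t\<rceil>}"
  proof
    fix n assume "n \<in> {n::nat. 0 < n \<and> real n \<le> t \<and> k_full k n}"
    hence "real n \<le> t" by simp
    hence "int n \<le> \<lceil>t\<rceil>" by (metis ceiling_mono ceiling_of_nat)
    thus "n \<in> {..nat \<lceil>t\<rceil>}" by simp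
  qed
qed auto

theorem theorem4:
  fixes k :: nat and \<epsilon> :: real
  assumes "abc_conjecture" and "k \<ge> 3" and "\<epsilon> > 0"
  shows "\<exists>C::real. C > 0 \<and>
    (\<forall>x y :: real. 1 \<le> x \<and> 1 \<le> y \<and> y \<le> x \<longrightarrow>
       real (Q k (x + y)) - real (Q k x) \<le> C * y powr ((2 + \<epsilon>) / real k))"
proof -
  define e where "e = min (\<epsilon> / real k) (1/4)"
  have e0: "e > 0" using assms unfolding e_def by simp
  have e1: "e \<le> \<epsilon> / real k" "e \<le> 1/4" unfolding e_def by (rule min.cobounded1, rule min.cobounded2)
  obtain C where C: "C > 0" and abc: "\<forall>a b c :: int. a + b = c \<and> coprime a b \<and> a * b * c \<noteq> 0 \<longrightarrow>
          real_of_int (max \<bar>a\<bar> (max \<bar>b\<bar> \<bar>c\<bar>)) \<le> C * real_of_int (kappa (a * b * c)) powr (1 + e)"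
    using assms(1) e0 unfolding abc_conjecture_def by blast
  define c where "c = 1 / C powr (1 / (1 + e))"
  define th where "th = 1 / (1 + e) - 2 / real k"
  have k1: "k \<ge> 1" using assms by simp
  have c0: "c > 0" unfolding c_def using C by simp
  have th0: "th > 0"
  proof -
    have "1 / (1 + e) \<ge> 4/5" using e0 e1 by (simp add: field_simps)
    moreover have "2 / real k \<le> 2 / 3" using assms(2) by (simp add: field_simps)
    ultimately show ?thesis unfolding th_def by simp
  qed
  have th1: "1 - th \<le> (2 + \<epsilon>) / real k"
  proof -
    have "1 - 1 / (1 + e) = e / (1 + e)" using e0 by (simp add: field_simps)
    also have "\<dots> \<le> e" using e0 by (simp add: field_simps)
    finally have "1 - th \<le> e + 2 / real k" unfolding th_def by simp
    also have "\<dots> \<le> \<epsilon> / real k + 2 / real k" using e1 by simp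
    finally show ?thesis by (simp add: add_divide_distrib)
  qed
  have gp: "c * real b powr th \<le> real (b - a)"
    if "k_full k a" "0 < a" "a < b" "k_full k b" for a b
    by (rule gap2[OF abc C e0 k1 c_def th_def that])
  show ?thesis
  proof (intro exI[of _ "1 / c + 1"] conjI allI impI)
    show "1 / c + 1 > 0" using c0 by (intro add_pos_pos) auto
    fix x y :: real assume xy: "1 \<le> x \<and> 1 \<le> y \<and> y \<le> x"
    define T1 where "T1 = {n::nat. 0 < n \<and> real n \<le> x \<and> k_full k n}"
    define S where "S = {n::nat. 0 < n \<and> x < real n \<and> real n \<le> x + y \<and> k_full k n}"
    have fT1: "finite T1" unfolding T1_def by (rule finite_le)
    have fS: "finite S" by (rule finite_subset[OF _ finite_le[of "x+y" k]]) (auto simp: S_def)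
    have "{n::nat. 0 < n \<and> real n \<le> x + y \<and> k_full k n} = T1 \<union> S"
      unfolding T1_def S_def using xy by auto
    hence "Q k (x + y) = card T1 + card S"
      unfolding Q_def using fT1 fS by (simp add: card_Un_disjoint T1_def S_def disjoint_iff)
    moreover have "Q k x = card T1" unfolding Q_def T1_def ..
    ultimately have eqQ: "real (Q k (x + y)) - real (Q k x) = real (card S)" by simp
    define \<delta> where "\<delta> = c * x powr th"
    have d0: "\<delta> > 0" unfolding \<delta>_def using c0 xy by simp
    define f where "f n = \<lfloor>(real n - x) / \<delta>\<rfloor>" for n :: nat
    have sep: "f a < f b" if "a \<in> S" "b \<in> S" "a < b" for a b
    proof -
      have "c * x powr th \<le> c * real b powr th"
        using that xy th0 c0 unfolding S_def by (intro mult_left_mono powr_mono2) auto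
      also have "\<dots> \<le> real (b - a)" using gp[of a b] that unfolding S_def by auto
      finally have "\<delta> \<le> real b - real a" unfolding \<delta>_def using that by simp
      hence "1 \<le> (real b - real a) / \<delta>" using d0 by (simp add: le_divide_eq)
      moreover have "(real b - x) / \<delta> = (real a - x) / \<delta> + (real b - real a) / \<delta>"
        by (simp add: diff_divide_distrib)
      ultimately have "(real a - x) / \<delta> + 1 \<le> (real b - x) / \<delta>" by linarith
      hence "\<lfloor>(real a - x) / \<delta>\<rfloor> + 1 \<le> \<lfloor>(real b - x) / \<delta>\<rfloor>"
        by (metis floor_add_int floor_mono of_int_1)
      thus ?thesis unfolding f_def by simp
    qed
    have inj: "inj_on f S"
    proof (rule inj_onI)
      fix a b assume "a \<in> S" "b \<in> S" "f a = f b"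
      thus "a = b" using sep[of a b] sep[of b a] by (cases a b rule: linorder_cases) auto
    qed
    have img: "f ` S \<subseteq> {0..\<lfloor>y / \<delta>\<rfloor>}"
    proof
      fix m assume "m \<in> f ` S"
      then obtain n where n: "n \<in> S" "m = f n" by auto
      have "0 \<le> (real n - x) / \<delta>" "(real n - x) / \<delta> \<le> y / \<delta>"
        using n d0 unfolding S_def by (auto intro!: divide_right_mono)
      thus "m \<in> {0..\<lfloor>y / \<delta>\<rfloor>}" unfolding n f_def by (auto intro: floor_mono)
    qed
    have "card S \<le> card {0..\<lfloor>y / \<delta>\<rfloor>}"
      using card_inj_on_le[OF inj img] by simp
    hence "real (card S) \<le> real (nat (\<lfloor>y / \<delta>\<rfloor> + 1))" by simp
    also have "\<dots> \<le> y / \<delta> + 1" using d0 xy by (simp add: nat_le_iff)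
    also have "y / \<delta> \<le> (1 / c) * y powr (1 - th)"
    proof -
      have "y powr th \<le> x powr th" using xy th0 by (intro powr_mono2) auto
      hence "y / \<delta> \<le> y / (c * y powr th)"
        unfolding \<delta>_def using xy c0 by (intro divide_left_mono mult_left_mono) auto
      also have "\<dots> = (1 / c) * y powr (1 - th)" using xy by (simp add: powr_diff)
      finally show ?thesis .
    qed
    also have "(1 / c) * y powr (1 - th) \<le> (1 / c) * y powr ((2 + \<epsilon>) / real k)"
      using xy th1 c0 by (intro mult_left_mono powr_mono) auto
    finally have cs: "real (card S) \<le> (1 / c) * y powr ((2 + \<epsilon>) / real k) + 1" by simp
    have "1 \<le> y powr ((2 + \<epsilon>) / real k)" using xy assms by (intro ge_one_powr_ge_zero) auto
    hence "real (card S) \<le> (1 / c + 1) * y powr ((2 + \<epsilon>) / real k)"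
      using cs by (simp add: distrib_right)
    thus "real (Q k (x + y)) - real (Q k x) \<le> (1 / c + 1) * y powr ((2 + \<epsilon>) / real k)"
      using eqQ by simp
  qed
qed

end
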